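(* Let $G\rightrightarrows X$ be a topological groupoid which is proper and source-locally trivial. Then every fixed point $x\in X$ of $G$ is stable, i.e. every neighborhood of $x$ in $X$ contains a $G$-invariant neighborhood of $x$.
   Context: All spaces are Hausdorff and neighborhoods are open. $\alpha,\beta$ denote the target and source maps of $G$. $G$ is proper if the map $(\alpha,\beta):G\to X\times X$ is proper (preimages of compact sets are compact). $G$ is source-locally trivial if the source map $\beta:G\to X$ is a locally trivial fibration. A point $x\in X$ is a fixed point if its orbit $\{\alpha(g): \beta(g)=x\}$ is $\{x\}$. A subset $A\subseteq X$ is $G$-invariant if $\alpha(g)\in A$ whenever $\beta(g)\in A$. *)

theory Defs
  imports "HOL-Analysis.Analysis"
begin

text \<open>A topological groupoid with arrow space the type 'g and object space the type 'x
 (both Hausdorff, via the type class t2_space).  alpha = target, beta = source,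
 gmul g h is defined (composable) when beta g = alpha h, gunit x is the identity at x,
 invg is the inversion.\<close>

definition topological_groupoid ::
  "('g::t2_space \<Rightarrow> 'x::t2_space) \<Rightarrow> ('g \<Rightarrow> 'x) \<Rightarrow> ('g \<Rightarrow> 'g \<Rightarrow> 'g)
     \<Rightarrow> ('x \<Rightarrow> 'g) \<Rightarrow> ('g \<Rightarrow> 'g) \<Rightarrow> bool" where
  "topological_groupoid \<alpha> \<beta> gmul gunit invg \<longleftrightarrow>
     (\<forall>g h. \<beta> g = \<alpha> h \<longrightarrow> \<alpha> (gmul g h) = \<alpha> g \<and> \<beta> (gmul g h) = \<beta> h) \<and>
     (\<forall>g h k. \<beta> g = \<alpha> h \<and> \<beta> h = \<alpha> k \<longrightarrow> gmul (gmul g h) k = gmul g (gmul h k)) \<and>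
     (\<forall>x. \<alpha> (gunit x) = x \<and> \<beta> (gunit x) = x) \<and>
     (\<forall>g. gmul (gunit (\<alpha> g)) g = g \<and> gmul g (gunit (\<beta> g)) = g) \<and>
     (\<forall>g. \<alpha> (invg g) = \<beta> g \<and> \<beta> (invg g) = \<alpha> g \<and>
          gmul g (invg g) = gunit (\<alpha> g) \<and> gmul (invg g) g = gunit (\<beta> g)) \<and>
     continuous_on UNIV \<alpha> \<and> continuous_on UNIV \<beta> \<and>
     continuous_on UNIV gunit \<and> continuous_on UNIV invg \<and>
     continuous_on {(g, h). \<beta> g = \<alpha> h} (\<lambda>(g, h). gmul g h)"

definition proper_groupoid :: "('g::t2_space \<Rightarrow> 'x::t2_space) \<Rightarrow> ('g \<Rightarrow> 'x) \<Rightarrow> bool" where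
  "proper_groupoid \<alpha> \<beta> \<longleftrightarrow>
     (\<forall>K :: ('x \<times> 'x) set. compact K \<longrightarrow> compact ((\<lambda>g. (\<alpha> g, \<beta> g)) -` K))"

text \<open>The typical fibre F is taken (w.l.o.g.) to be a subspace of E, since it is homeomorphic
 to any fibre over U.\<close>
definition locally_trivial_fibration :: "('e::topological_space \<Rightarrow> 'b::topological_space) \<Rightarrow> bool" where
  "locally_trivial_fibration p \<longleftrightarrow> continuous_on UNIV p \<and>
     (\<forall>b. \<exists>U. open U \<and> b \<in> U \<and> (\<exists>(F :: 'e set) (h :: 'e \<Rightarrow> 'b \<times> 'e).
        homeomorphic_map (subtopology euclidean (p -` U))
          (prod_topology (subtopology euclidean U) (subtopology euclidean F)) h \<and>
        (\<forall>e \<in> p -` U. fst (h e) = p e)))"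

definition groupoid_fixed_point :: "('g \<Rightarrow> 'x) \<Rightarrow> ('g \<Rightarrow> 'x) \<Rightarrow> 'x \<Rightarrow> bool" where
  "groupoid_fixed_point \<alpha> \<beta> x \<longleftrightarrow> {\<alpha> g | g. \<beta> g = x} = {x}"

definition groupoid_invariant :: "('g \<Rightarrow> 'x) \<Rightarrow> ('g \<Rightarrow> 'x) \<Rightarrow> 'x set \<Rightarrow> bool" where
  "groupoid_invariant \<alpha> \<beta> A \<longleftrightarrow> (\<forall>g. \<beta> g \<in> A \<longrightarrow> \<alpha> g \<in> A)"

definition groupoid_stable_point :: "('g \<Rightarrow> 'x::topological_space) \<Rightarrow> ('g \<Rightarrow> 'x) \<Rightarrow> 'x \<Rightarrow> bool" where
  "groupoid_stable_point \<alpha> \<beta> x \<longleftrightarrow>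
     (\<forall>N. open N \<and> x \<in> N \<longrightarrow>
        (\<exists>V. open V \<and> x \<in> V \<and> V \<subseteq> N \<and> groupoid_invariant \<alpha> \<beta> V))"

end

theory Submission
  imports Defs
begin

lemma ltf_open_map:
  assumes ltf: "locally_trivial_fibration (p::'e::topological_space \<Rightarrow> 'b::topological_space)"
    and Wo: "open Wo"
  shows "open (p ` Wo)"
proof (subst open_subopen, intro ballI)
  fix y assume "y \<in> p ` Wo"
  then obtain go where go: "go \<in> Wo" "y = p go" by auto
  obtain U and F :: "'e set" and h :: "'e \<Rightarrow> 'b \<times> 'e" where U: "open U" "y \<in> U"
    and hom: "homeomorphic_map (subtopology euclidean (p -` U))
          (prod_topology (subtopology euclidean U) (subtopology euclidean F)) h"
    and fib: "\<forall>e \<in> p -` U. fst (h e) = p e"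
    using ltf unfolding locally_trivial_fibration_def by blast
  have "openin (subtopology euclidean (p -` U)) (p -` U \<inter> Wo)"
    using Wo by (simp add: openin_open_Int)
  hence "openin (prod_topology (subtopology euclidean U) (subtopology euclidean F)) (h ` (p -` U \<inter> Wo))"
    using homeomorphic_imp_open_map[OF hom] unfolding open_map_def by blast
  hence "openin (subtopology euclidean U) (fst ` h ` (p -` U \<inter> Wo))"
    using open_map_fst unfolding open_map_def by blast
  hence op: "open (fst ` h ` (p -` U \<inter> Wo))"
    using U(1) openin_open_trans by blast
  have "y \<in> fst ` h ` (p -` U \<inter> Wo)"
    using go U fib by (auto intro!: image_eqI)
  moreover have "fst ` h ` (p -` U \<inter> Wo) \<subseteq> p ` Wo"
    using fib by auto
  ultimately show "\<exists>T. open T \<and> y \<in> T \<and> T \<subseteq> p ` Wo" using op by blast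
qed

theorem theorem3p3:
  fixes \<alpha> \<beta> :: "'g::t2_space \<Rightarrow> 'x::t2_space"
    and gmul :: "'g \<Rightarrow> 'g \<Rightarrow> 'g" and gunit :: "'x \<Rightarrow> 'g" and invg :: "'g \<Rightarrow> 'g"
  assumes "topological_groupoid \<alpha> \<beta> gmul gunit invg"
    and "proper_groupoid \<alpha> \<beta>"
    and "locally_trivial_fibration \<beta>"
    and "groupoid_fixed_point \<alpha> \<beta> x"
  shows "groupoid_stable_point \<alpha> \<beta> x"
  unfolding groupoid_stable_point_def
proof (intro allI impI)
  fix N assume "open N \<and> x \<in> N"
  hence N: "open N" "x \<in> N" by auto
  have mul: "\<And>g h. \<beta> g = \<alpha> h \<Longrightarrow> \<alpha> (gmul g h) = \<alpha> g \<and> \<beta> (gmul g h) = \<beta> h"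
    and unit: "\<And>x. \<alpha> (gunit x) = x \<and> \<beta> (gunit x) = x"
    and inv: "\<And>g. \<alpha> (invg g) = \<beta> g \<and> \<beta> (invg g) = \<alpha> g"
    and ca: "continuous_on UNIV \<alpha>" and cb: "continuous_on UNIV \<beta>"
    using assms(1) unfolding topological_groupoid_def by blast+
  have fixd: "\<And>g. \<beta> g = x \<Longrightarrow> \<alpha> g = x"
    using assms(4) unfolding groupoid_fixed_point_def by blast
  obtain U and F :: "'g set" and h :: "'g \<Rightarrow> 'x \<times> 'g" where U: "open U" "x \<in> U"
    and hom0: "homeomorphic_map (subtopology euclidean (\<beta> -` U))
          (prod_topology (subtopology euclidean U) (subtopology euclidean F)) h"
    and fib: "\<forall>e \<in> \<beta> -` U. fst (h e) = \<beta> e"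
    using assms(3) unfolding locally_trivial_fibration_def by blast
  have hom: "homeomorphic_map (subtopology euclidean (\<beta> -` U)) (subtopology euclidean (U \<times> F)) h"
    using hom0 by simp
  have himg: "h ` (\<beta> -` U) = U \<times> F"
    using homeomorphic_imp_surjective_map[OF hom] by simp
  have hinj: "inj_on h (\<beta> -` U)"
    using homeomorphic_imp_injective_map[OF hom] by simp
  have hcont: "continuous_on (\<beta> -` U) h"
    using homeomorphic_imp_continuous_map[OF hom] by (simp add: continuous_map_subtopology_eu)
  define K where "K = \<beta> -` {x}"
  have "K = (\<lambda>g. (\<alpha> g, \<beta> g)) -` {(x, x)}"
    unfolding K_def using fixd by auto
  hence cK: "compact K"
    using assms(2) unfolding proper_groupoid_def by simp
  have KU: "K \<subseteq> \<beta> -` U" unfolding K_def using U by auto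
  have hK: "h ` K = {x} \<times> F"
  proof
    show "h ` K \<subseteq> {x} \<times> F"
    proof
      fix z assume "z \<in> h ` K"
      then obtain e where e: "e \<in> K" "z = h e" by auto
      hence "z \<in> U \<times> F" using KU himg by blast
      moreover have "fst z = x" using e fib KU unfolding K_def by auto
      ultimately show "z \<in> {x} \<times> F" by (cases z) auto
    qed
  next
    show "{x} \<times> F \<subseteq> h ` K"
    proof
      fix z assume z: "z \<in> {x} \<times> F"
      hence "z \<in> h ` (\<beta> -` U)" using himg U by auto
      then obtain e where e: "e \<in> \<beta> -` U" "z = h e" by auto
      have "fst z = x" using z by (simp add: mem_Times_iff)
      moreover have "fst (h e) = \<beta> e" using fib e(1) by blast
      ultimately have "\<beta> e = x" using e(2) by simp
      thus "z \<in> h ` K" using e unfolding K_def by auto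
    qed
  qed
  have "compact (h ` K)"
    using compact_continuous_image[OF continuous_on_subset[OF hcont KU] cK] .
  hence "compact (snd ` h ` K)" by (simp add: compact_continuous_image continuous_on_snd)
  hence cF: "compact F" using hK by simp
  define Q where "Q = \<beta> -` U \<inter> \<alpha> -` N"
  have "open (\<alpha> -` N)" using N(1) ca open_vimage by blast
  hence "openin (subtopology euclidean (\<beta> -` U)) Q"
    unfolding Q_def by (simp add: openin_open_Int)
  hence hQ: "openin (prod_topology (subtopology euclidean U) (subtopology euclidean F)) (h ` Q)"
    using homeomorphic_imp_open_map[OF hom0] unfolding open_map_def by blast
  have "K \<subseteq> Q" unfolding Q_def K_def using fixd N U by auto
  hence "{x} \<times> F \<subseteq> h ` Q" using hK by blast
  then obtain A B where AB: "openin (subtopology euclidean U) A" "openin (subtopology euclidean F) B"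
     "x \<in> A" "F \<subseteq> B" "A \<times> B \<subseteq> h ` Q"
  proof -
    have c1: "compactin (subtopology euclidean F) F"
      using cF by (simp add: compactin_subtopology compactin_euclidean_iff)
    have c2: "x \<in> topspace (subtopology euclidean U)" using U by simp
    show ?thesis using tube_lemma_right[OF hQ c1 c2 \<open>{x} \<times> F \<subseteq> h ` Q\<close>] that by blast
  qed
  have oA: "open A" using AB(1) U(1) openin_open_trans by blast
  have AU: "A \<subseteq> U" using AB(1) openin_imp_subset by force
  have AS: "\<alpha> g \<in> N" if "\<beta> g \<in> A" for g
  proof -
    have gU: "g \<in> \<beta> -` U" using that AU by auto
    hence "h g \<in> U \<times> F" using himg by blast
    hence "snd (h g) \<in> F" by (simp add: mem_Times_iff)
    moreover have "h g = (\<beta> g, snd (h g))" using fib gU by (metis prod.collapse)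
    ultimately have "h g = (\<beta> g, snd (h g))" "snd (h g) \<in> F" by blast+
    hence "h g \<in> A \<times> B" using that AB(4) by (metis mem_Sigma_iff subsetD)
    hence "h g \<in> h ` Q" by (rule subsetD[OF AB(5)])
    then obtain q where q: "q \<in> Q" "h g = h q" by (rule imageE) simp
    have qU: "q \<in> \<beta> -` U" using q(1) unfolding Q_def by simp
    have "g = q" using inj_onD[OF hinj q(2) gU qU] .
    thus ?thesis using q unfolding Q_def by auto
  qed
  define V where "V = \<beta> ` (\<alpha> -` A)"
  have "open (\<alpha> -` A)" using oA ca open_vimage by blast
  hence oV: "open V" unfolding V_def using ltf_open_map[OF assms(3)] by blast
  have xV: "x \<in> V" unfolding V_def using unit[of x] AB(3) by (metis image_eqI vimageI)
  have VS: "\<alpha> g' \<in> N" if g'V: "\<beta> g' \<in> V" for g'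
  proof -
    obtain g where g: "\<alpha> g \<in> A" "\<beta> g = \<beta> g'" using g'V unfolding V_def by auto
    have c: "\<beta> g' = \<alpha> (invg g)" using inv g by simp
    have "\<beta> (gmul g' (invg g)) = \<alpha> g" "\<alpha> (gmul g' (invg g)) = \<alpha> g'"
      using mul[OF c] inv by auto
    thus ?thesis using AS g by metis
  qed
  have "V \<subseteq> N"
  proof
    fix y assume "y \<in> V" thus "y \<in> N" using VS[of "gunit y"] unit by auto
  qed
  moreover have "groupoid_invariant \<alpha> \<beta> V"
    unfolding groupoid_invariant_def
  proof (intro allI impI)
    fix k assume "\<beta> k \<in> V"
    then obtain g where g: "\<alpha> g \<in> A" "\<beta> g = \<beta> k" unfolding V_def by auto
    have c: "\<beta> g = \<alpha> (invg k)" using inv g by simp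
    have "\<alpha> (gmul g (invg k)) = \<alpha> g" "\<beta> (gmul g (invg k)) = \<alpha> k"
      using mul[OF c] inv by auto
    thus "\<alpha> k \<in> V" unfolding V_def using g by (metis image_eqI vimageI)
  qed
  ultimately show "\<exists>V. open V \<and> x \<in> V \<and> V \<subseteq> N \<and> groupoid_invariant \<alpha> \<beta> V"
    using oV xV by blast
qed

end
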